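(* Let $X>0$ and let $w:[0,X]\to\mathbb{R}$ be a smooth function with $w''(x)\ge w(x)$ and $w(x)\ge0$ for all $x\in[0,X]$, and $w'(0)\ge0$. Then for all $x,y\ge0$ with $x+y\le X$, $w(x+y)\ge w(x)\cosh(y)$. *)

theory Defs
  imports "HOL-Analysis.Analysis"
begin

text \<open>Smoothness on a closed interval S: a sequence of functions D with D 0 = w and
  D (Suc k) the derivative of D k at every point of S, taken within S
  (one-sided at the endpoints).\<close>
definition smooth_derivs_on :: "real set \<Rightarrow> (nat \<Rightarrow> real \<Rightarrow> real) \<Rightarrow> (real \<Rightarrow> real) \<Rightarrow> bool" where
  "smooth_derivs_on S D w \<longleftrightarrow> (\<forall>x\<in>S. D 0 x = w x) \<and>
     (\<forall>k. \<forall>x\<in>S. (D k has_real_derivative D (Suc k) x) (at x within S))"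

end

theory Submission
  imports Defs
begin

lemma mono_helper:
  fixes f f' :: "real \<Rightarrow> real"
  assumes "a \<le> b"
    and d: "\<forall>t\<in>{a..b}. (f has_real_derivative f' t) (at t within {a..b})"
    and n: "\<forall>t\<in>{a..b}. f' t \<ge> 0"
  shows "f a \<le> f b"
proof (rule DERIV_nonneg_imp_increasing_open[OF assms(1)])
  fix x assume x: "a < x" "x < b"
  then have xi: "x \<in> {a..b}" by simp
  have "(f has_real_derivative f' x) (at x within {a..b})" using d xi by blast
  then have "(f has_real_derivative f' x) (at x)" using at_within_Icc_at[OF x] by simp
  then show "\<exists>y. DERIV f x :> y \<and> y \<ge> 0" using n xi by blast
next
  show "continuous_on {a..b} f"
    using d by (meson DERIV_continuous continuous_on_eq_continuous_within)
qed

theorem lemma5p3: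
  fixes X :: real and w :: "real \<Rightarrow> real" and D :: "nat \<Rightarrow> real \<Rightarrow> real"
  assumes "X > 0"
    and "smooth_derivs_on {0..X} D w"
    and "\<forall>x\<in>{0..X}. D 2 x \<ge> w x"
    and "\<forall>x\<in>{0..X}. w x \<ge> 0"
    and "D 1 0 \<ge> 0"
  shows "\<forall>x y. x \<ge> 0 \<longrightarrow> y \<ge> 0 \<longrightarrow> x + y \<le> X \<longrightarrow> w (x + y) \<ge> w x * cosh y"
proof (intro allI impI)
  have D0: "\<forall>x\<in>{0..X}. D 0 x = w x" and
    Dk: "\<And>k. \<forall>x\<in>{0..X}. (D k has_real_derivative D (Suc k) x) (at x within {0..X})"
    using assms(2) unfolding smooth_derivs_on_def by auto
  have e1: "D (Suc 0) = D 1" and e2: "D (Suc 1) = D 2" by (simp_all add: numeral_2_eq_2)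
  have dsub: "\<forall>t\<in>{a..b}. (D k has_real_derivative D (Suc k) t) (at t within {a..b})"
    if ab: "0 \<le> a" "b \<le> X" for k a b
  proof
    fix t assume t: "t \<in> {a..b}"
    then have "t \<in> {0..X}" using ab by simp
    then have "(D k has_real_derivative D (Suc k) t) (at t within {0..X})" using Dk by blast
    moreover have "{a..b} \<subseteq> {0..X}" using ab by simp
    ultimately show "(D k has_real_derivative D (Suc k) t) (at t within {a..b})"
      by (rule DERIV_subset)
  qed
  have D1nn: "D 1 t \<ge> 0" if "t \<in> {0..X}" for t
  proof -
    have t: "0 \<le> t" "t \<le> X" using that by simp_all
    have "D 1 0 \<le> D 1 t"
    proof (rule mono_helper[where f="D 1" and a=0 and b=t and f' = "D 2"])
      show "0 \<le> t" by (rule t(1))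
      show "\<forall>s\<in>{0..t}. (D 1 has_real_derivative D 2 s) (at s within {0..t})"
        using dsub[of 0 t 1] t unfolding e2 by simp
      show "\<forall>s\<in>{0..t}. 0 \<le> D 2 s"
      proof
        fix s assume "s \<in> {0..t}"
        then have "s \<in> {0..X}" using t by simp
        then show "0 \<le> D 2 s" using assms(3,4) by (meson order_trans)
      qed
    qed
    then show ?thesis using assms(5) by linarith
  qed
  fix x y :: real
  assume xy: "x \<ge> 0" "y \<ge> 0" "x + y \<le> X"
  define b where "b = x + y"
  define c where "c = w x"
  have xb: "x \<le> b" "0 \<le> x" "b \<le> X" using xy b_def by simp_all
  have I: "{x..b} \<subseteq> {0..X}" using xb by simp
  have d0: "\<forall>t\<in>{x..b}. (D 0 has_real_derivative D 1 t) (at t within {x..b})"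
    using dsub[of x b 0] xb unfolding e1 by simp
  have d1: "\<forall>t\<in>{x..b}. (D 1 has_real_derivative D 2 t) (at t within {x..b})"
    using dsub[of x b 1] xb unfolding e2 by simp
  define h where "h t = D 0 t - c * cosh (t - x)" for t
  define h1 where "h1 t = D 1 t - c * sinh (t - x)" for t
  have xX: "x \<in> {0..X}" using xb by simp
  have hx: "h x = 0" using D0 xX unfolding h_def c_def by simp
  have q: "exp (-(t - x)) * (h1 t + h t) \<ge> 0" if t: "t \<in> {x..b}" for t
  proof -
    have tb: "x \<le> t" "t \<le> b" using t by simp_all
    have "exp (-(x - x)) * (h1 x + h x) \<le> exp (-(t - x)) * (h1 t + h t)"
    proof (rule mono_helper[where f="\<lambda>t. exp (-(t - x)) * (h1 t + h t)" and a=x and b=t and f' = "\<lambda>t. exp (-(t - x)) * (D 2 t - D 0 t)"])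
      show "x \<le> t" by (rule tb(1))
      show "\<forall>s\<in>{x..t}. ((\<lambda>t. exp (-(t - x)) * (h1 t + h t)) has_real_derivative
              exp (-(s - x)) * (D 2 s - D 0 s)) (at s within {x..t})"
      proof
        fix s assume s: "s \<in> {x..t}"
        have sub: "{x..t} \<subseteq> {x..b}" using tb by simp
        have sI: "s \<in> {x..b}" using s tb by simp
        have a0: "(D 0 has_real_derivative D 1 s) (at s within {x..t})"
          using d0 sI sub DERIV_subset by blast
        have a1: "(D 1 has_real_derivative D 2 s) (at s within {x..t})"
          using d1 sI sub DERIV_subset by blast
        show "((\<lambda>t. exp (-(t - x)) * (h1 t + h t)) has_real_derivative
              exp (-(s - x)) * (D 2 s - D 0 s)) (at s within {x..t})"
          unfolding h_def h1_def
          apply (rule derivative_eq_intros a0 a1 refl)+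
          apply (simp add: algebra_simps)
          done
      qed
      show "\<forall>s\<in>{x..t}. 0 \<le> exp (-(s - x)) * (D 2 s - D 0 s)"
      proof
        fix s assume s: "s \<in> {x..t}"
        then have "s \<in> {0..X}" using tb xb by simp
        then have "D 2 s - D 0 s \<ge> 0" using assms(3) D0 by simp
        then show "0 \<le> exp (-(s - x)) * (D 2 s - D 0 s)" by simp
      qed
    qed
    moreover have "h1 x \<ge> 0" using D1nn xX unfolding h1_def by simp
    ultimately show ?thesis using hx by simp
  qed
  have "exp (x - x) * h x \<le> exp (b - x) * h b"
  proof (rule mono_helper[where f="\<lambda>t. exp (t - x) * h t" and a=x and b=b and f' = "\<lambda>t. exp (t - x) * (h1 t + h t)"])
    show "x \<le> b" by (rule xb(1))
    show "\<forall>s\<in>{x..b}. ((\<lambda>t. exp (t - x) * h t) has_real_derivative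
              exp (s - x) * (h1 s + h s)) (at s within {x..b})"
    proof
      fix s assume s: "s \<in> {x..b}"
      have a0: "(D 0 has_real_derivative D 1 s) (at s within {x..b})"
        using d0 s by blast
      show "((\<lambda>t. exp (t - x) * h t) has_real_derivative
              exp (s - x) * (h1 s + h s)) (at s within {x..b})"
        unfolding h_def h1_def
        apply (rule derivative_eq_intros a0 refl)+
        apply (simp add: algebra_simps)
        done
    qed
    show "\<forall>s\<in>{x..b}. 0 \<le> exp (s - x) * (h1 s + h s)"
    proof
      fix s assume s: "s \<in> {x..b}"
      have "0 \<le> exp (-(s - x)) * (h1 s + h s)" using q s by blast
      then have "h1 s + h s \<ge> 0" by (simp add: zero_le_mult_iff)
      then show "0 \<le> exp (s - x) * (h1 s + h s)" by simp
    qed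
  qed
  then have "h b \<ge> 0" using hx by (simp add: zero_le_mult_iff)
  moreover have "D 0 b = w b" using D0 xb by simp
  ultimately show "w (x + y) \<ge> w x * cosh y"
    unfolding h_def b_def c_def by (simp add: algebra_simps)
qed

end
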